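(* Let $\varphi:\mathbb{C}^n\to\mathbb{R}$ be $C^2$ and $A=\nabla^\perp\varphi$. Then for every $f\in C^2_c(\mathbb{C}^n)$, $$\sum_{j=1}^n\int_{\mathbb{C}^n}\Big|\frac{\partial(e^{\varphi}f)}{\partial\bar z_j}\Big|^2e^{-2\varphi}=\frac14\int_{\mathbb{C}^n}|\nabla_Af|^2-\frac14\int_{\mathbb{C}^n}\Delta\varphi\,|f|^2.$$
   Context: Identify $\mathbb{C}^n$ with $\mathbb{R}^{2n}$ via $z_j=x_j+iy_j$, coordinates ordered $(x_1,y_1,\dots,x_n,y_n)$; $\Delta$ is the Euclidean Laplacian. $\nabla^\perp\varphi=(-\partial_{y_1}\varphi,\partial_{x_1}\varphi,\dots,-\partial_{y_n}\varphi,\partial_{x_n}\varphi)$. For $A:\mathbb{R}^{2n}\to\mathbb{R}^{2n}$, $|\nabla_Af|^2=\sum_{k=1}^{2n}|(\partial_k-iA_k)f|^2$; here this equals $\sum_{j=1}^n(|(\partial_{x_j}+i\partial_{y_j}\varphi)f|^2+|(\partial_{y_j}-i\partial_{x_j}\varphi)f|^2)$. Integrals are with respect to Lebesgue measure. *)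

theory Defs
  imports "HOL-Analysis.Analysis"
begin

text \<open>Points of C^n are vectors of type complex^'n; the real coordinates of z are
  x_j = Re (z$j), y_j = Im (z$j). The real directions are axis j 1 (for x_j)
  and axis j ii (for y_j). lborel on complex^'n is Lebesgue measure on R^(2n).\<close>

definition pd :: "('a::real_normed_vector \<Rightarrow> 'b::real_normed_vector) \<Rightarrow> 'a \<Rightarrow> 'a \<Rightarrow> 'b" where
  "pd f v z = frechet_derivative f (at z) v"

definition dx :: "'n::finite \<Rightarrow> complex^'n" where "dx j = axis j 1"
definition dy :: "'n::finite \<Rightarrow> complex^'n" where "dy j = axis j \<i>"

definition C2 :: "(complex^'n::finite \<Rightarrow> 'b::real_normed_vector) \<Rightarrow> bool" where
  "C2 f \<longleftrightarrow> (\<forall>z. f differentiable (at z)) \<and>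
     (\<forall>v z. (\<lambda>w. pd f v w) differentiable (at z)) \<and>
     (\<forall>v u. continuous_on UNIV (\<lambda>w. pd (\<lambda>w'. pd f v w') u w))"

definition has_compact_support :: "('a::real_normed_vector \<Rightarrow> 'b::zero) \<Rightarrow> bool" where
  "has_compact_support f \<longleftrightarrow> compact (closure {z. f z \<noteq> 0})"

definition dbar :: "'n::finite \<Rightarrow> (complex^'n \<Rightarrow> complex) \<Rightarrow> complex^'n \<Rightarrow> complex" where
  "dbar j g z = (pd g (dx j) z + \<i> * pd g (dy j) z) / 2"

text \<open>nabla-perp phi, stored as a complex vector: component j has real part
  A_{x_j} = - d phi/dy_j and imaginary part A_{y_j} = d phi/dx_j.\<close>
definition nabla_perp :: "(complex^'n::finite \<Rightarrow> real) \<Rightarrow> complex^'n \<Rightarrow> complex^'n" where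
  "nabla_perp \<phi> z = (\<chi> j. Complex (- pd \<phi> (dy j) z) (pd \<phi> (dx j) z))"

definition mag_grad_sq :: "(complex^'n::finite \<Rightarrow> complex^'n) \<Rightarrow> (complex^'n \<Rightarrow> complex) \<Rightarrow> complex^'n \<Rightarrow> real" where
  "mag_grad_sq A f z = (\<Sum>j\<in>UNIV.
      (cmod (pd f (dx j) z - \<i> * of_real (Re (A z $ j)) * f z))\<^sup>2 +
      (cmod (pd f (dy j) z - \<i> * of_real (Im (A z $ j)) * f z))\<^sup>2)"

definition laplacian :: "(complex^'n::finite \<Rightarrow> real) \<Rightarrow> complex^'n \<Rightarrow> real" where
  "laplacian \<phi> z = (\<Sum>j\<in>UNIV. pd (\<lambda>w. pd \<phi> (dx j) w) (dx j) z + pd (\<lambda>w. pd \<phi> (dy j) w) (dy j) z)"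

end

theory Submission
  imports Defs
begin

lemma pd_has: "f differentiable (at z) \<Longrightarrow> (f has_derivative (\<lambda>v. pd f v z)) (at z)"
  unfolding pd_def by (simp add: frechet_derivative_works[symmetric])

lemma pd_eqI: "(f has_derivative F) (at z) \<Longrightarrow> pd f v z = F v"
  unfolding pd_def using frechet_derivative_at by metis

lemma pd_linear: "f differentiable (at z) \<Longrightarrow> linear (\<lambda>v. pd f v z)"
  using pd_has has_derivative_linear by blast

lemma line_vd:
  assumes "f differentiable (at (z + s *\<^sub>R v))"
  shows "((\<lambda>t. f (z + t *\<^sub>R v)) has_vector_derivative pd f v (z + s *\<^sub>R v)) (at s within S)"
proof -
  have 1: "((\<lambda>t. z + t *\<^sub>R v) has_derivative (\<lambda>t. t *\<^sub>R v)) (at s within S)"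
    by (auto intro!: derivative_eq_intros)
  have 2: "(f has_derivative (\<lambda>w. pd f w (z + s *\<^sub>R v))) (at (z + s *\<^sub>R v) within ((\<lambda>t. z + t *\<^sub>R v) ` S))"
    using pd_has[OF assms] has_derivative_at_withinI by blast
  have "((f \<circ> (\<lambda>t. z + t *\<^sub>R v)) has_derivative ((\<lambda>w. pd f w (z + s *\<^sub>R v)) \<circ> (\<lambda>t. t *\<^sub>R v))) (at s within S)"
    using diff_chain_within[OF 1 2] .
  moreover have "((\<lambda>w. pd f w (z + s *\<^sub>R v)) \<circ> (\<lambda>t. t *\<^sub>R v)) = (\<lambda>t. t *\<^sub>R pd f v (z + s *\<^sub>R v))"
    using linear_scale[OF pd_linear[OF assms]] by (auto simp: o_def)
  ultimately show ?thesis unfolding has_vector_derivative_def by (simp add: o_def)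
qed

lemma mvt_lin:
  fixes h :: "real \<Rightarrow> 'b::real_normed_vector"
  assumes t: "0 \<le> t"
    and d: "\<And>s. s \<in> {0..t} \<Longrightarrow> (h has_vector_derivative h' s) (at s within {0..t})"
    and B: "\<And>s. s \<in> {0..t} \<Longrightarrow> norm (h' s - c) \<le> B"
  shows "norm (h t - h 0 - t *\<^sub>R c) \<le> B * t"
proof -
  define g where "g s = h s - s *\<^sub>R c" for s
  have "\<And>s. s \<in> {0..t} \<Longrightarrow> (g has_derivative (\<lambda>x. x *\<^sub>R (h' s - c))) (at s within {0..t})"
    unfolding g_def using d[unfolded has_vector_derivative_def]
    by (auto intro!: derivative_eq_intros simp: scaleR_diff_right)
  moreover have "\<And>s. s \<in> {0..t} \<Longrightarrow> onorm (\<lambda>x. x *\<^sub>R (h' s - c)) \<le> B"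
    using B by (subst onorm_scaleR_left) (auto simp: onorm_id)
  ultimately have "norm (g t - g 0) \<le> B * norm (t - 0)"
    using t by (intro differentiable_bound[of "{0..t}" g]) auto
  moreover have "h t - h 0 - t *\<^sub>R c = g t - g 0" by (simp add: g_def)
  ultimately show ?thesis using t by simp
qed

lemma schwarz_est:
  fixes f :: "'a::real_normed_vector \<Rightarrow> 'b::real_normed_vector"
  assumes df: "\<And>w. f differentiable (at w)"
    and dfX: "\<And>w. (\<lambda>w. pd f X w) differentiable (at w)"
    and c: "continuous (at z) (\<lambda>w. pd (\<lambda>w. pd f X w) Y w)"
    and e: "e > 0"
  shows "\<exists>d>0. \<forall>t. 0 < t \<and> t < d \<longrightarrow>
     norm (f (z + t *\<^sub>R X + t *\<^sub>R Y) - f (z + t *\<^sub>R X) - f (z + t *\<^sub>R Y) + f z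
           - (t * t) *\<^sub>R pd (\<lambda>w. pd f X w) Y z) \<le> e * (t * t)"
proof -
  define fX where "fX = (\<lambda>w. pd f X w)"
  define fXY where "fXY = (\<lambda>w. pd fX Y w)"
  from c e obtain d0 where d0: "d0 > 0" "\<And>w. dist w z < d0 \<Longrightarrow> dist (fXY w) (fXY z) < e"
    unfolding continuous_at_eps_delta fXY_def fX_def by blast
  define d where "d = d0 / (norm X + norm Y + 1)"
  have np: "0 < norm X + norm Y + 1" by (smt (verit) norm_ge_zero)
  have dpos: "d > 0" using d0 np by (simp add: d_def)
  have close: "norm (fXY (z + s *\<^sub>R X + r *\<^sub>R Y) - fXY z) \<le> e"
    if "s \<in> {0..t}" "r \<in> {0..t}" "t < d" for s r t
  proof -
    have "norm (s *\<^sub>R X + r *\<^sub>R Y) \<le> s * norm X + r * norm Y"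
      using that by (auto intro!: order_trans[OF norm_triangle_ineq])
    also have "\<dots> \<le> t * (norm X + norm Y + 1)"
    proof -
      have "s * norm X \<le> t * norm X" "r * norm Y \<le> t * norm Y"
        using that by (auto intro!: mult_right_mono)
      then show ?thesis using that by (auto simp: distrib_left)
    qed
    also have "\<dots> < d * (norm X + norm Y + 1)"
      using that by (intro mult_strict_right_mono) (use np in auto)
    also have "\<dots> = d0" by (use np in \<open>simp add: d_def\<close>)
    finally have "dist (z + s *\<^sub>R X + r *\<^sub>R Y) z < d0" by (simp add: dist_norm)
    from d0(2)[OF this] show ?thesis by (simp add: dist_norm)
  qed
  show ?thesis
  proof (intro exI[of _ d] conjI allI impI dpos)
    fix t :: real assume t: "0 < t \<and> t < d"
    have A: "norm (fX (z + s *\<^sub>R X + t *\<^sub>R Y) - fX (z + s *\<^sub>R X) - t *\<^sub>R fXY z) \<le> e * t"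
      if s: "s \<in> {0..t}" for s
    proof -
      have "norm ((\<lambda>r. fX (z + s *\<^sub>R X + r *\<^sub>R Y)) t - (\<lambda>r. fX (z + s *\<^sub>R X + r *\<^sub>R Y)) 0 - t *\<^sub>R fXY z) \<le> e * t"
      proof (rule mvt_lin[where h' = "\<lambda>r. fXY (z + s *\<^sub>R X + r *\<^sub>R Y)"])
        show "0 \<le> t" using t by simp
        show "((\<lambda>r. fX (z + s *\<^sub>R X + r *\<^sub>R Y)) has_vector_derivative fXY (z + s *\<^sub>R X + r *\<^sub>R Y)) (at r within {0..t})" for r
          unfolding fXY_def by (rule line_vd) (use dfX in \<open>simp add: fX_def\<close>)
        show "norm (fXY (z + s *\<^sub>R X + r *\<^sub>R Y) - fXY z) \<le> e" if "r \<in> {0..t}" for r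
          using close[OF s that] t by simp
      qed
      then show ?thesis by simp
    qed
    define g where "g s = f ((z + t *\<^sub>R Y) + s *\<^sub>R X) - f (z + s *\<^sub>R X)" for s
    have "norm (g t - g 0 - t *\<^sub>R (t *\<^sub>R fXY z)) \<le> (e * t) * t"
    proof (rule mvt_lin[where h' = "\<lambda>s. fX ((z + t *\<^sub>R Y) + s *\<^sub>R X) - fX (z + s *\<^sub>R X)"])
      show "0 \<le> t" using t by simp
      show "(g has_vector_derivative fX ((z + t *\<^sub>R Y) + s *\<^sub>R X) - fX (z + s *\<^sub>R X)) (at s within {0..t})" for s
        unfolding g_def fX_def by (intro has_vector_derivative_diff line_vd df)
      show "norm (fX ((z + t *\<^sub>R Y) + s *\<^sub>R X) - fX (z + s *\<^sub>R X) - t *\<^sub>R fXY z) \<le> e * t" if "s \<in> {0..t}" for s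
        using A[OF that] by (simp add: algebra_simps)
    qed
    then show "norm (f (z + t *\<^sub>R X + t *\<^sub>R Y) - f (z + t *\<^sub>R X) - f (z + t *\<^sub>R Y) + f z
           - (t * t) *\<^sub>R pd (\<lambda>w. pd f X w) Y z) \<le> e * (t * t)"
      by (simp add: g_def fXY_def fX_def algebra_simps)
  qed
qed

lemma schwarz:
  fixes f :: "'a::real_normed_vector \<Rightarrow> 'b::real_normed_vector"
  assumes df: "\<And>w. f differentiable (at w)"
    and dfX: "\<And>w. (\<lambda>w. pd f X w) differentiable (at w)"
    and dfY: "\<And>w. (\<lambda>w. pd f Y w) differentiable (at w)"
    and c1: "continuous (at z) (\<lambda>w. pd (\<lambda>w. pd f X w) Y w)"
    and c2: "continuous (at z) (\<lambda>w. pd (\<lambda>w. pd f Y w) X w)"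
  shows "pd (\<lambda>w. pd f X w) Y z = pd (\<lambda>w. pd f Y w) X z"
proof -
  let ?a = "pd (\<lambda>w. pd f X w) Y z" and ?b = "pd (\<lambda>w. pd f Y w) X z"
  have key: "norm (?a - ?b) \<le> 2 * e" if e: "e > 0" for e
  proof -
    obtain d1 where d1: "d1 > 0" "\<And>t. 0 < t \<and> t < d1 \<Longrightarrow>
     norm (f (z + t *\<^sub>R X + t *\<^sub>R Y) - f (z + t *\<^sub>R X) - f (z + t *\<^sub>R Y) + f z
           - (t * t) *\<^sub>R ?a) \<le> e * (t * t)"
      using schwarz_est[OF df dfX c1 e] by blast
    obtain d2 where d2: "d2 > 0" "\<And>t. 0 < t \<and> t < d2 \<Longrightarrow>
     norm (f (z + t *\<^sub>R Y + t *\<^sub>R X) - f (z + t *\<^sub>R Y) - f (z + t *\<^sub>R X) + f z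
           - (t * t) *\<^sub>R ?b) \<le> e * (t * t)"
      using schwarz_est[OF df dfY c2 e] by blast
    define t where "t = min d1 d2 / 2"
    have t: "0 < t" "t < d1" "t < d2" using d1 d2 by (auto simp: t_def)
    define D where "D = f (z + t *\<^sub>R X + t *\<^sub>R Y) - f (z + t *\<^sub>R X) - f (z + t *\<^sub>R Y) + f z"
    have 1: "norm (D - (t * t) *\<^sub>R ?a) \<le> e * (t * t)" using d1(2) t unfolding D_def by auto
    have 2: "norm (D - (t * t) *\<^sub>R ?b) \<le> e * (t * t)" using d2(2)[of t] t unfolding D_def
      by (simp add: algebra_simps)
    have "(t * t) *\<^sub>R (?a - ?b) = (D - (t * t) *\<^sub>R ?b) - (D - (t * t) *\<^sub>R ?a)"
      by (simp add: scaleR_diff_right)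
    then have "norm ((t * t) *\<^sub>R (?a - ?b)) \<le> norm (D - (t * t) *\<^sub>R ?b) + norm (D - (t * t) *\<^sub>R ?a)"
      by (metis norm_triangle_ineq4)
    then have "norm ((t * t) *\<^sub>R (?a - ?b)) \<le> 2 * e * (t * t)"
      using 1 2 by simp
    then show ?thesis using t by (simp add: mult_le_cancel_right)
  qed
  have "norm (?a - ?b) = 0"
  proof (rule ccontr)
    assume "norm (?a - ?b) \<noteq> 0"
    then have "norm (?a - ?b) > 0" by simp
    with key[of "norm (?a - ?b) / 4"] show False by simp
  qed
  then show ?thesis by simp
qed

lemma int_cs:
  fixes g :: "'a::euclidean_space \<Rightarrow> 'b::{banach, second_countable_topology}"
  assumes c: "continuous_on UNIV g" and s: "\<And>w. norm w > R \<Longrightarrow> g w = 0"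
  shows "integrable lborel g"
proof -
  have "integrable lborel (\<lambda>x. indicator (cball 0 R) x *\<^sub>R g x)"
    by (rule borel_integrable_compact) (auto intro: continuous_on_subset[OF c])
  moreover have "(\<lambda>x. indicator (cball 0 R) x *\<^sub>R g x) = g"
    using s by (auto simp: indicator_def fun_eq_iff)
  ultimately show ?thesis by simp
qed

lemma meas_cont:
  fixes g :: "'a::euclidean_space \<Rightarrow> 'b::{banach, second_countable_topology}"
  assumes c: "continuous_on UNIV g"
  shows "g \<in> borel_measurable lborel"
  using borel_measurable_continuous_onI[OF c] by simp

lemma integral_translate:
  fixes g :: "'a::euclidean_space \<Rightarrow> 'b::{banach, second_countable_topology}"
  assumes "g \<in> borel_measurable borel"
  shows "integral\<^sup>L lborel (\<lambda>z. g (z + c)) = integral\<^sup>L lborel g"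
proof -
  have "integral\<^sup>L lborel g = integral\<^sup>L (distr lborel borel ((+) c)) g"
    by (simp add: lborel_distr_plus)
  also have "\<dots> = integral\<^sup>L lborel (\<lambda>z. g (c + z))"
    by (rule integral_distr) (auto intro: assms)
  finally show ?thesis by (simp add: add.commute)
qed

lemma diff_quot_lim:
  fixes u :: "'a::real_normed_vector \<Rightarrow> 'b::real_normed_vector"
  assumes du: "u differentiable (at z)"
  shows "(\<lambda>k. real (Suc k) *\<^sub>R (u (z + (1 / real (Suc k)) *\<^sub>R v) - u z)) \<longlonglongrightarrow> pd u v z"
proof -
  define h where "h t = u (z + t *\<^sub>R v)" for t
  define D where "D = pd u v z"
  have "(h has_vector_derivative D) (at 0)"
    unfolding h_def D_def using line_vd[of u z 0 v UNIV] du by simp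
  then have "((\<lambda>y. norm ((h y - h 0) - y *\<^sub>R D) / norm (y - 0)) \<longlongrightarrow> 0) (at 0)"
    unfolding has_vector_derivative_def has_derivative_iff_norm by simp
  moreover have "filterlim (\<lambda>k. 1 / real (Suc k)) (at 0) sequentially"
    unfolding filterlim_at using LIMSEQ_inverse_real_of_nat by (simp add: inverse_eq_divide)
  ultimately have "(\<lambda>k. norm ((h (1 / real (Suc k)) - h 0) - (1 / real (Suc k)) *\<^sub>R D) / norm (1 / real (Suc k) - 0)) \<longlonglongrightarrow> 0"
    by (rule filterlim_compose)
  moreover have "norm ((h (1 / real (Suc k)) - h 0) - (1 / real (Suc k)) *\<^sub>R D) / norm (1 / real (Suc k) - 0)
     = norm (real (Suc k) *\<^sub>R (u (z + (1 / real (Suc k)) *\<^sub>R v) - u z) - D)" for k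
  proof -
    have "real (Suc k) *\<^sub>R (u (z + (1 / real (Suc k)) *\<^sub>R v) - u z) - D
       = real (Suc k) *\<^sub>R ((h (1 / real (Suc k)) - h 0) - (1 / real (Suc k)) *\<^sub>R D)"
      by (simp add: h_def scaleR_diff_right)
    then show ?thesis by (simp add: divide_inverse)
  qed
  ultimately have "(\<lambda>k. norm (real (Suc k) *\<^sub>R (u (z + (1 / real (Suc k)) *\<^sub>R v) - u z) - D)) \<longlonglongrightarrow> 0"
    by simp
  then show ?thesis unfolding D_def
    using Lim_null tendsto_norm_zero_iff by blast
qed

lemma ftc:
  fixes u :: "'a::euclidean_space \<Rightarrow> 'b::{banach, second_countable_topology}"
  assumes du: "\<And>w. u differentiable (at w)"
    and cu: "continuous_on UNIV (\<lambda>w. pd u v w)"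
    and supp: "\<And>w. norm w > R \<Longrightarrow> u w = 0"
  shows "integral\<^sup>L lborel (\<lambda>w. pd u v w) = 0"
proof -
  define C where "C = cball (0::'a) (R + norm v)"
  define K where "K = cball (0::'a) (R + 2 * norm v)"
  have "compact ((\<lambda>w. pd u v w) ` K)"
    unfolding K_def by (intro compact_continuous_image continuous_on_subset[OF cu]) auto
  then obtain M0 where "\<forall>x\<in>(\<lambda>w. pd u v w) ` K. norm x \<le> M0"
    using compact_imp_bounded bounded_iff by metis
  then obtain M where M: "\<And>w. w \<in> K \<Longrightarrow> norm (pd u v w) \<le> M" and M0: "M \<ge> 0"
    by (metis max.cobounded1 max.coboundedI1 image_eqI max.cobounded2)
  have cont_u: "continuous_on UNIV u"
    using du differentiable_imp_continuous_within continuous_at_imp_continuous_on by blast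
  have int_u: "integrable lborel u" by (rule int_cs[OF cont_u supp])
  define s where "s k z = real (Suc k) *\<^sub>R (u (z + (1 / real (Suc k)) *\<^sub>R v) - u z)" for k z
  have cont_s: "continuous_on UNIV (s k)" for k
    unfolding s_def by (intro continuous_intros continuous_on_compose2[OF cont_u]) auto
  have int_s0: "integral\<^sup>L lborel (s k) = 0" for k
  proof -
    have ib: "integrable lborel (\<lambda>z. u (z + (1 / real (Suc k)) *\<^sub>R v))"
      using int_cs[of "\<lambda>z. u (z + (1 / real (Suc k)) *\<^sub>R v)" "R + norm v"]
    proof -
      have "continuous_on UNIV (\<lambda>z. u (z + (1 / real (Suc k)) *\<^sub>R v))"
        by (intro continuous_intros continuous_on_compose2[OF cont_u]) auto
      moreover have "u (z + (1 / real (Suc k)) *\<^sub>R v) = 0" if "norm z > R + norm v" for z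
      proof (rule supp)
        have "norm ((1 / real (Suc k)) *\<^sub>R v) \<le> norm v"
          by (simp add: mult_left_le_one_le field_simps)
        then show "norm (z + (1 / real (Suc k)) *\<^sub>R v) > R"
          using that norm_triangle_ineq2[of z "-((1 / real (Suc k)) *\<^sub>R v)"] by simp
      qed
      ultimately show ?thesis by (rule int_cs)
    qed
    have "integral\<^sup>L lborel (s k) = real (Suc k) *\<^sub>R (integral\<^sup>L lborel (\<lambda>z. u (z + (1 / real (Suc k)) *\<^sub>R v)) - integral\<^sup>L lborel u)"
      unfolding s_def using ib int_u by simp
    also have "integral\<^sup>L lborel (\<lambda>z. u (z + (1 / real (Suc k)) *\<^sub>R v)) = integral\<^sup>L lborel u"
      by (rule integral_translate) (rule borel_measurable_continuous_onI[OF cont_u])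
    finally show ?thesis by simp
  qed
  have bound: "norm (s k z) \<le> M * indicator C z" for k z
  proof (cases "z \<in> C")
    case False
    then have nz: "norm z > R + norm v" by (simp add: C_def)
    have "norm ((1 / real (Suc k)) *\<^sub>R v) \<le> norm v"
      by (simp add: mult_left_le_one_le field_simps)
    then have "norm (z + (1 / real (Suc k)) *\<^sub>R v) > R"
      using nz norm_triangle_ineq2[of z "-((1 / real (Suc k)) *\<^sub>R v)"] by simp
    moreover have "norm z > R" using nz norm_ge_zero[of v] by linarith
    ultimately have "s k z = 0" unfolding s_def using supp by simp
    then show ?thesis using False by simp
  next
    case True
    define t where "t = 1 / real (Suc k)"
    have t: "0 \<le> t" "t \<le> 1" by (auto simp: t_def)
    have "norm ((\<lambda>r. u (z + r *\<^sub>R v)) t - (\<lambda>r. u (z + r *\<^sub>R v)) 0 - t *\<^sub>R 0) \<le> M * t"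
    proof (rule mvt_lin[where h' = "\<lambda>r. pd u v (z + r *\<^sub>R v)"])
      show "0 \<le> t" by fact
      show "((\<lambda>r. u (z + r *\<^sub>R v)) has_vector_derivative pd u v (z + r *\<^sub>R v)) (at r within {0..t})" for r
        by (rule line_vd) (rule du)
      show "norm (pd u v (z + r *\<^sub>R v) - 0) \<le> M" if r: "r \<in> {0..t}" for r
      proof -
        have "norm (z + r *\<^sub>R v) \<le> norm z + r * norm v"
          using r norm_triangle_ineq[of z "r *\<^sub>R v"] by simp
        also have "\<dots> \<le> (R + norm v) + 1 * norm v"
          using True r t by (intro add_mono mult_right_mono) (auto simp: C_def)
        finally have "z + r *\<^sub>R v \<in> K" by (simp add: K_def)
        then show ?thesis using M by simp
      qed
    qed
    then have "norm (u (z + t *\<^sub>R v) - u z) \<le> M * t" by simp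
    then have "real (Suc k) * norm (u (z + t *\<^sub>R v) - u z) \<le> real (Suc k) * (M * t)"
      by (intro mult_left_mono) auto
    also have "real (Suc k) * (M * t) = M" by (simp add: t_def)
    finally show ?thesis using True by (simp add: s_def t_def)
  qed
  have lim: "(\<lambda>k. s k z) \<longlonglongrightarrow> pd u v z" for z
    unfolding s_def by (rule diff_quot_lim[OF du])
  have intC: "integrable lborel (\<lambda>z. M * indicator C z)"
    unfolding C_def by (intro integrable_mult_right integrable_real_indicator) (use emeasure_lborel_cball_finite in auto)
  have "(\<lambda>k. integral\<^sup>L lborel (s k)) \<longlonglongrightarrow> integral\<^sup>L lborel (\<lambda>w. pd u v w)"
    using meas_cont[OF cu] meas_cont[OF cont_s] intC lim bound
    by (intro integral_dominated_convergence[where w = "\<lambda>z. M * indicator C z"]) auto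
  then show ?thesis using int_s0 by (simp add: LIMSEQ_const_iff)
qed

lemma diff_cont: "(\<And>z. g differentiable (at z)) \<Longrightarrow> continuous_on UNIV g"
  using differentiable_imp_continuous_within continuous_at_imp_continuous_on by blast

lemma pd_zero_out:
  assumes "\<And>w. norm w > R \<Longrightarrow> g w = 0" "norm w > R"
  shows "pd g v w = 0"
proof -
  have "((\<lambda>_. 0) has_derivative (\<lambda>h. 0)) (at w)" by simp
  then have "(g has_derivative (\<lambda>h. 0)) (at w)"
    by (rule has_derivative_transform_within_open[where s = "{w. norm w > R}"])
       (use assms in \<open>auto intro: open_Collect_less continuous_intros\<close>)
  then show ?thesis by (rule pd_eqI)
qed

lemma supp_of_cs:
  assumes "has_compact_support f"
  obtains R where "\<And>w. norm w > R \<Longrightarrow> f w = 0"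
proof -
  from assms have "bounded (closure {z. f z \<noteq> 0})"
    unfolding has_compact_support_def by (rule compact_imp_bounded)
  then obtain R where Rb: "\<forall>x\<in>closure {z. f z \<noteq> 0}. norm x \<le> R" using bounded_iff by metis
  have R: "norm w \<le> R" if "f w \<noteq> 0" for w
  proof -
    have "w \<in> closure {z. f z \<noteq> 0}" using that closure_subset[of "{z. f z \<noteq> 0}"] by auto
    then show ?thesis using Rb by auto
  qed
  have "f w = 0" if "norm w > R" for w
  proof (rule ccontr)
    assume "f w \<noteq> 0"
    then show False using R[of w] that by simp
  qed
  then show ?thesis using that by blast
qed

lemma pd_exp_mult:
  fixes \<phi> :: "'a::real_normed_vector \<Rightarrow> real" and f :: "'a \<Rightarrow> complex"
  assumes "\<phi> differentiable (at z)" "f differentiable (at z)"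
  shows "pd (\<lambda>w. of_real (exp (\<phi> w)) * f w) v z
     = of_real (exp (\<phi> z)) * (of_real (pd \<phi> v z) * f z + pd f v z)"
proof -
  have "((\<lambda>w. of_real (exp (\<phi> w)) * f w) has_derivative
      (\<lambda>h. of_real (exp (\<phi> z)) * pd f h z + of_real (exp (\<phi> z) * pd \<phi> h z) * f z)) (at z)"
    using pd_has[OF assms(1)] pd_has[OF assms(2)]
    by (auto intro!: derivative_eq_intros)
  then show ?thesis by (simp add: pd_eqI algebra_simps)
qed

lemma C2D:
  assumes "C2 g"
  shows "\<And>z. g differentiable (at z)" "\<And>v z. pd g v differentiable (at z)"
    "\<And>v u. continuous_on UNIV (pd (pd g v) u)" "\<And>v. continuous_on UNIV (pd g v)"
  using assms unfolding C2_def by (auto intro: diff_cont)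

lemma I1:
  fixes \<phi> :: "complex^'n::finite \<Rightarrow> real" and f :: "complex^'n \<Rightarrow> complex"
  assumes p: "C2 \<phi>" and q: "C2 f" and supp: "\<And>w. norm w > R \<Longrightarrow> f w = 0"
  shows "integrable lborel (\<lambda>w. pd \<phi> v w * Re (pd f v w * cnj (f w)))"
   "integrable lborel (\<lambda>w. pd (pd \<phi> v) v w * (cmod (f w))\<^sup>2)"
   "(LINT w|lborel. pd \<phi> v w * Re (pd f v w * cnj (f w))) = -1/2 * (LINT w|lborel. pd (pd \<phi> v) v w * (cmod (f w))\<^sup>2)"
proof -
  note P = C2D[OF p] and Q = C2D[OF q]
  define u where "u w = pd \<phi> v w * Re (f w * cnj (f w))" for w
  have hd: "(u has_derivative (\<lambda>h. pd (pd \<phi> v) h w * Re (f w * cnj (f w)) + pd \<phi> v w * Re (pd f h w * cnj (f w) + f w * cnj (pd f h w)))) (at w)" for w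
    unfolding u_def using pd_has[OF P(2)[of v w]] pd_has[OF Q(1)[of w]]
    by (auto intro!: derivative_eq_intros simp: algebra_simps)
  have pdu: "pd u v w = pd (pd \<phi> v) v w * (cmod (f w))\<^sup>2 + 2 * (pd \<phi> v w * Re (pd f v w * cnj (f w)))" for w
    unfolding pd_eqI[OF hd] cmod_power2 by (simp add: algebra_simps power2_eq_square)
  have c1: "continuous_on UNIV (\<lambda>w. pd (pd \<phi> v) v w * (cmod (f w))\<^sup>2)"
    using P(3) diff_cont[OF Q(1)] by (intro continuous_intros) auto
  have c2: "continuous_on UNIV (\<lambda>w. pd \<phi> v w * Re (pd f v w * cnj (f w)))"
    using P(4) Q(4) diff_cont[OF Q(1)] by (intro continuous_intros) auto
  show i1: "integrable lborel (\<lambda>w. pd \<phi> v w * Re (pd f v w * cnj (f w)))"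
    by (rule int_cs[OF c2, of R]) (simp add: supp)
  show i2: "integrable lborel (\<lambda>w. pd (pd \<phi> v) v w * (cmod (f w))\<^sup>2)"
    by (rule int_cs[OF c1, of R]) (simp add: supp)
  have "integral\<^sup>L lborel (\<lambda>w. pd u v w) = 0"
  proof (rule ftc)
    show "u differentiable (at w)" for w using hd[of w] by (auto simp: differentiable_def)
    show "continuous_on UNIV (\<lambda>w. pd u v w)" unfolding pdu
      by (rule continuous_on_add[OF c1 continuous_on_mult[OF continuous_on_const c2]])
    show "norm w > R \<Longrightarrow> u w = 0" for w by (simp add: u_def supp)
  qed
  then show "(LINT w|lborel. pd \<phi> v w * Re (pd f v w * cnj (f w))) = -1/2 * (LINT w|lborel. pd (pd \<phi> v) v w * (cmod (f w))\<^sup>2)"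
    unfolding pdu using i1 i2 by simp
qed

lemma I2:
  fixes f :: "complex^'n::finite \<Rightarrow> complex"
  assumes q: "C2 f" and supp: "\<And>w. norm w > R \<Longrightarrow> f w = 0"
  shows "integrable lborel (\<lambda>w. Im (pd f X w * cnj (pd f Y w)))"
    "(LINT w|lborel. Im (pd f X w * cnj (pd f Y w))) = 0"
proof -
  note Q = C2D[OF q]
  have sym: "pd (pd f X) Y w = pd (pd f Y) X w" for w
    by (rule schwarz) (use Q in \<open>auto simp: continuous_on_eq_continuous_within\<close>)
  have zX: "pd f V w = 0" if "norm w > R" for w V using pd_zero_out[OF supp that] .
  have cf: "continuous_on UNIV f" using diff_cont[OF Q(1)] .
  have ibp: "(LINT w|lborel. pd f A w * cnj (pd f B w)) = - (LINT w|lborel. f w * cnj (pd (pd f B) A w))"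
    "integrable lborel (\<lambda>w. pd f A w * cnj (pd f B w))" for A B
  proof -
    define u where "u w = f w * cnj (pd f B w)" for w
    have hd: "(u has_derivative (\<lambda>h. pd f h w * cnj (pd f B w) + f w * cnj (pd (pd f B) h w))) (at w)" for w
      unfolding u_def using pd_has[OF Q(2)[of B w]] pd_has[OF Q(1)[of w]]
      by (auto intro!: derivative_eq_intros simp: algebra_simps)
    have pdu: "pd u A w = pd f A w * cnj (pd f B w) + f w * cnj (pd (pd f B) A w)" for w
      unfolding pd_eqI[OF hd] ..
    have c1: "continuous_on UNIV (\<lambda>w. pd f A w * cnj (pd f B w))"
      using Q(4) by (intro continuous_intros) auto
    have c2: "continuous_on UNIV (\<lambda>w. f w * cnj (pd (pd f B) A w))"
      using Q(3) cf by (intro continuous_intros) auto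
    show i1: "integrable lborel (\<lambda>w. pd f A w * cnj (pd f B w))"
      by (rule int_cs[OF c1, of R]) (simp add: zX)
    have i2: "integrable lborel (\<lambda>w. f w * cnj (pd (pd f B) A w))"
      by (rule int_cs[OF c2, of R]) (simp add: supp)
    have "integral\<^sup>L lborel (\<lambda>w. pd u A w) = 0"
    proof (rule ftc)
      show "u differentiable (at w)" for w using hd[of w] by (auto simp: differentiable_def)
      show "continuous_on UNIV (\<lambda>w. pd u A w)" unfolding pdu by (rule continuous_on_add[OF c1 c2])
      show "norm w > R \<Longrightarrow> u w = 0" for w by (simp add: u_def supp)
    qed
    then show "(LINT w|lborel. pd f A w * cnj (pd f B w)) = - (LINT w|lborel. f w * cnj (pd (pd f B) A w))"
      unfolding pdu using i1 i2 by (simp add: eq_neg_iff_add_eq_0)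
  qed
  define I where "I = (LINT w|lborel. pd f X w * cnj (pd f Y w))"
  have "I = (LINT w|lborel. pd f Y w * cnj (pd f X w))"
    unfolding I_def ibp(1) sym ..
  also have "\<dots> = cnj I"
  proof -
    have e: "(\<lambda>w. pd f Y w * cnj (pd f X w)) = (\<lambda>w. cnj (pd f X w * cnj (pd f Y w)))"
      by (simp add: fun_eq_iff mult.commute)
    have "cnj I = integral\<^sup>L lborel (\<lambda>w. cnj (pd f X w * cnj (pd f Y w)))"
      unfolding I_def by (simp only: Bochner_Integration.integral_cnj)
    then show ?thesis by (simp only: e)
  qed
  finally have "Im I = 0" by (simp add: complex_eq_iff)
  moreover have "(LINT w|lborel. Im (pd f X w * cnj (pd f Y w))) = Im I"
    unfolding I_def by (rule integral_bounded_linear[OF bounded_linear_Im ibp(2)])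
  ultimately show "(LINT w|lborel. Im (pd f X w * cnj (pd f Y w))) = 0" by simp
  show "integrable lborel (\<lambda>w. Im (pd f X w * cnj (pd f Y w)))"
    using ibp(2) by (rule integrable_bounded_linear[OF bounded_linear_Im])
qed

lemma alg2:
  fixes a fx fy :: complex and px py e :: real
  assumes "e > 0"
  shows "(cmod ((of_real e * (of_real px * a + fx) + \<i> * (of_real e * (of_real py * a + fy))) / 2))\<^sup>2 * (inverse e)\<^sup>2
    = 1/4 * ((cmod (fx - \<i> * of_real (- py) * a))\<^sup>2 + (cmod (fy - \<i> * of_real px * a))\<^sup>2)
      + 1/2 * Im (fx * cnj fy) + 1/2 * (px * Re (fx * cnj a)) + 1/2 * (py * Re (fy * cnj a))"
  unfolding cmod_power2 using assms by (simp add: field_simps power2_eq_square; algebra)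

lemma exp_m2: "exp (- 2 * (x::real)) = (inverse (exp x))\<^sup>2"
  by (simp add: exp_minus[symmetric] power2_eq_square exp_add[symmetric])

theorem mainTheorem16:
  fixes \<phi> :: "complex^'n::finite \<Rightarrow> real" and f :: "complex^'n \<Rightarrow> complex"
  assumes "C2 \<phi>" and "C2 f" and "has_compact_support f"
  shows "(\<Sum>j\<in>UNIV. (LINT z|lborel.
            (cmod (dbar j (\<lambda>w. of_real (exp (\<phi> w)) * f w) z))\<^sup>2 * exp (- 2 * \<phi> z)))
       = 1/4 * (LINT z|lborel. mag_grad_sq (nabla_perp \<phi>) f z)
         - 1/4 * (LINT z|lborel. laplacian \<phi> z * (cmod (f z))\<^sup>2)"
proof -
  obtain R where supp: "\<And>w. norm w > R \<Longrightarrow> f w = 0" using supp_of_cs[OF assms(3)] by blast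
  note P = C2D[OF assms(1)] and Q = C2D[OF assms(2)]
  have cf: "continuous_on UNIV f" using diff_cont[OF Q(1)] .
  have cp: "continuous_on UNIV \<phi>" using diff_cont[OF P(1)] .
  have zd: "pd f V w = 0" if "norm w > R" for w V using pd_zero_out[OF supp that] .
  define magj where "magj j z = (cmod (pd f (dx j) z - \<i> * of_real (Re (nabla_perp \<phi> z $ j)) * f z))\<^sup>2 +
      (cmod (pd f (dy j) z - \<i> * of_real (Im (nabla_perp \<phi> z $ j)) * f z))\<^sup>2" for j z
  define lx where "lx j z = pd (pd \<phi> (dx j)) (dx j) z * (cmod (f z))\<^sup>2" for j z
  define ly where "ly j z = pd (pd \<phi> (dy j)) (dy j) z * (cmod (f z))\<^sup>2" for j z
  define L where "L j z = (cmod (dbar j (\<lambda>w. of_real (exp (\<phi> w)) * f w) z))\<^sup>2 * exp (- 2 * \<phi> z)" for j z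
  define ix where "ix j z = pd \<phi> (dx j) z * Re (pd f (dx j) z * cnj (f z))" for j z
  define iy where "iy j z = pd \<phi> (dy j) z * Re (pd f (dy j) z * cnj (f z))" for j z
  define im where "im j z = Im (pd f (dx j) z * cnj (pd f (dy j) z))" for j z
  have magj_alt: "magj j z = (cmod (pd f (dx j) z - \<i> * of_real (- pd \<phi> (dy j) z) * f z))\<^sup>2 +
      (cmod (pd f (dy j) z - \<i> * of_real (pd \<phi> (dx j) z) * f z))\<^sup>2" for j z
    by (simp add: magj_def nabla_perp_def)
  have Lj: "L j z = 1/4 * magj j z + 1/2 * im j z + 1/2 * ix j z + 1/2 * iy j z" for j z
  proof -
    have "dbar j (\<lambda>w. of_real (exp (\<phi> w)) * f w) z =
      (of_real (exp (\<phi> z)) * (of_real (pd \<phi> (dx j) z) * f z + pd f (dx j) z) +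
        \<i> * (of_real (exp (\<phi> z)) * (of_real (pd \<phi> (dy j) z) * f z + pd f (dy j) z))) / 2"
      unfolding dbar_def pd_exp_mult[OF P(1) Q(1)] ..
    then show ?thesis
      unfolding L_def magj_alt im_def ix_def iy_def exp_m2
      by (simp only: alg2[OF exp_gt_zero])
  qed
  have cmag: "continuous_on UNIV (magj j)" for j
    unfolding magj_alt[abs_def] using P(4) Q(4) cf by (intro continuous_intros) auto
  have imag: "integrable lborel (magj j)" for j
    by (rule int_cs[OF cmag, of R]) (simp add: magj_alt zd supp)
  note I1' = I1[where R=R, OF assms(1,2) supp]
  note I2' = I2[where R=R, OF assms(2) supp]
  have intL: "(LINT z|lborel. L j z) = 1/4 * (LINT z|lborel. magj j z) - 1/4 * ((LINT z|lborel. lx j z) + (LINT z|lborel. ly j z))" for j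
  proof -
    have "(LINT z|lborel. L j z) = (LINT z|lborel. 1/4 * magj j z + 1/2 * im j z + 1/2 * ix j z + 1/2 * iy j z)"
      unfolding Lj ..
    also have "\<dots> = 1/4 * (LINT z|lborel. magj j z) + 1/2 * (LINT z|lborel. im j z) + 1/2 * (LINT z|lborel. ix j z) + 1/2 * (LINT z|lborel. iy j z)"
      using imag[of j] I1'(1)[where v="dx j"] I1'(1)[where v="dy j"] I2'(1)[where X="dx j" and Y="dy j"]
      by (simp add: ix_def iy_def im_def)
    also have "\<dots> = 1/4 * (LINT z|lborel. magj j z) - 1/4 * ((LINT z|lborel. lx j z) + (LINT z|lborel. ly j z))"
      using I1'(3)[where v="dx j"] I1'(3)[where v="dy j"] I2'(2)[where X="dx j" and Y="dy j"] unfolding ix_def iy_def im_def lx_def ly_def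
      by simp (simp add: field_simps)
    finally show ?thesis .
  qed
  have "(\<Sum>j\<in>UNIV. (LINT z|lborel. L j z)) = 1/4 * (\<Sum>j\<in>UNIV. LINT z|lborel. magj j z) - 1/4 * (\<Sum>j\<in>UNIV. (LINT z|lborel. lx j z) + (LINT z|lborel. ly j z))"
    unfolding intL by (simp add: sum_subtractf sum_distrib_left)
  also have "(\<Sum>j\<in>UNIV. LINT z|lborel. magj j z) = (LINT z|lborel. mag_grad_sq (nabla_perp \<phi>) f z)"
  proof -
    have "(LINT z|lborel. mag_grad_sq (nabla_perp \<phi>) f z) = (LINT z|lborel. (\<Sum>j\<in>UNIV. magj j z))"
      unfolding mag_grad_sq_def magj_def ..
    also have "\<dots> = (\<Sum>j\<in>UNIV. LINT z|lborel. magj j z)"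
      by (rule Bochner_Integration.integral_sum) (use imag in auto)
    finally show ?thesis by simp
  qed
  also have "(\<Sum>j\<in>UNIV. (LINT z|lborel. lx j z) + (LINT z|lborel. ly j z)) = (LINT z|lborel. laplacian \<phi> z * (cmod (f z))\<^sup>2)"
  proof -
    have "(LINT z|lborel. laplacian \<phi> z * (cmod (f z))\<^sup>2) = (LINT z|lborel. (\<Sum>j\<in>UNIV. lx j z + ly j z))"
      unfolding laplacian_def lx_def ly_def by (simp only: sum_distrib_right distrib_right)
    also have "\<dots> = (\<Sum>j\<in>UNIV. LINT z|lborel. lx j z + ly j z)"
      by (rule Bochner_Integration.integral_sum) (use I1'(2) in \<open>auto simp: lx_def ly_def\<close>)
    also have "\<dots> = (\<Sum>j\<in>UNIV. (LINT z|lborel. lx j z) + (LINT z|lborel. ly j z))"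
      using I1'(2) by (simp add: lx_def ly_def)
    finally show ?thesis by simp
  qed
  finally show ?thesis unfolding L_def .
qed

end
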